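(* Let $R$ be a commutative ring with nonzero identity, $\delta$ and $\gamma$ expansions of ideals of $R$, and $I$ a proper ideal of $R$. (1) If $\delta(I)$ is an $n$-ideal of $R$, then $I$ is a $\delta$-$n$-ideal of $R$. Conversely, if $\delta=\delta_1$ and $I$ is a $\delta_1$-$n$-ideal, then $\delta_1(I)=\sqrt{I}$ is an $n$-ideal of $R$. (2) If $\delta(J)\subseteq\gamma(J)$ for all ideals $J$ of $R$ and $I$ is a $\delta$-$n$-ideal of $R$, then $I$ is a $\gamma$-$n$-ideal of $R$. (3) If $\gamma(I)$ is a $\delta$-$n$-ideal of $R$, then $I$ is a $\delta\circ\gamma$-$n$-ideal of $R$.
   Context: An expansion of ideals of a ring $R$ is a map $\delta$ from the set of ideals of $R$ to itself such that $I\subseteq\delta(I)$ for every ideal $I$, and $\delta(I)\subseteq\delta(J)$ whenever $I\subseteq J$. $\sqrt{0}$ denotes the nilradical of $R$, and $\delta_1$ is the expansion $\delta_1(J)=\sqrt{J}$. Given an expansion $\delta$, a proper ideal $I$ of $R$ is a $\delta$-$n$-ideal if whenever $a,b\in R$ with $ab\in I$ and $a\notin\sqrt{0}$, then $b\in\delta(I)$. An $n$-ideal is a proper ideal $I$ such that $ab\in I$ and $a\notin\sqrt{0}$ imply $b\in I$. *)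

theory Defs
  imports "HOL-Algebra.Ideal"
begin

definition nilrad :: "('a, 'b) ring_scheme \<Rightarrow> 'a set" where
  "nilrad R = {a \<in> carrier R. \<exists>n::nat. a [^]\<^bsub>R\<^esub> n = \<zero>\<^bsub>R\<^esub>}"

definition rad :: "('a, 'b) ring_scheme \<Rightarrow> 'a set \<Rightarrow> 'a set" where
  "rad R J = {a \<in> carrier R. \<exists>n::nat. a [^]\<^bsub>R\<^esub> n \<in> J}"

definition expansion :: "('a, 'b) ring_scheme \<Rightarrow> ('a set \<Rightarrow> 'a set) \<Rightarrow> bool" where
  "expansion R \<delta> \<longleftrightarrow>
     (\<forall>I. ideal I R \<longrightarrow> ideal (\<delta> I) R \<and> I \<subseteq> \<delta> I) \<and>
     (\<forall>I J. ideal I R \<longrightarrow> ideal J R \<longrightarrow> I \<subseteq> J \<longrightarrow> \<delta> I \<subseteq> \<delta> J)"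

definition delta_n_ideal :: "('a, 'b) ring_scheme \<Rightarrow> ('a set \<Rightarrow> 'a set) \<Rightarrow> 'a set \<Rightarrow> bool" where
  "delta_n_ideal R \<delta> I \<longleftrightarrow> ideal I R \<and> I \<noteq> carrier R \<and>
     (\<forall>a \<in> carrier R. \<forall>b \<in> carrier R.
        a \<otimes>\<^bsub>R\<^esub> b \<in> I \<and> a \<notin> nilrad R \<longrightarrow> b \<in> \<delta> I)"

definition n_ideal :: "('a, 'b) ring_scheme \<Rightarrow> 'a set \<Rightarrow> bool" where
  "n_ideal R I \<longleftrightarrow> ideal I R \<and> I \<noteq> carrier R \<and>
     (\<forall>a \<in> carrier R. \<forall>b \<in> carrier R.
        a \<otimes>\<^bsub>R\<^esub> b \<in> I \<and> a \<notin> nilrad R \<longrightarrow> b \<in> I)"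

end

theory Submission
  imports Defs
begin

lemma (in cring) rad_sum_aux:
  fixes k :: nat
  assumes I: "ideal I R" and x: "x \<in> carrier R" and y: "y \<in> carrier R"
  shows "k = m + n \<Longrightarrow> c \<in> carrier R \<Longrightarrow> c \<otimes> x [^] m \<in> I \<Longrightarrow> c \<otimes> y [^] n \<in> I
     \<Longrightarrow> c \<otimes> (x \<oplus> y) [^] k \<in> I"
proof (induction k arbitrary: m n c)
  case 0
  then show ?case by simp
next
  case (Suc k m n c)
  interpret ideal I R by fact
  show ?case
  proof (cases "m = 0 \<or> n = 0")
    case True
    then have "c \<in> I" using Suc.prems by auto
    then show ?thesis using x y by (simp add: I_r_closed)
  next
    case False
    then obtain m' n' where m': "m = Suc m'" and n': "n = Suc n'"
      by (metis not0_implies_Suc)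
    have h1: "(c \<otimes> x) \<otimes> (x \<oplus> y) [^] k \<in> I"
    proof (rule Suc.IH[of m' n])
      show "k = m' + n" using Suc.prems m' by simp
      show "c \<otimes> x \<in> carrier R" using Suc.prems x by simp
      show "c \<otimes> x \<otimes> x [^] m' \<in> I" using Suc.prems(3) m' x Suc.prems(2)
        by (metis m_assoc nat_pow_Suc2 nat_pow_closed)
      have "c \<otimes> x \<otimes> y [^] n = x \<otimes> (c \<otimes> y [^] n)" using x y Suc.prems(2)
        by (simp add: m_lcomm m_comm m_assoc)
      then show "c \<otimes> x \<otimes> y [^] n \<in> I" using Suc.prems(4) x I_l_closed by simp
    qed
    have h2: "(c \<otimes> y) \<otimes> (x \<oplus> y) [^] k \<in> I"
    proof (rule Suc.IH[of m n'])
      show "k = m + n'" using Suc.prems n' by simp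
      show "c \<otimes> y \<in> carrier R" using Suc.prems y by simp
      show "c \<otimes> y \<otimes> y [^] n' \<in> I" using Suc.prems(4) n' y Suc.prems(2)
        by (metis m_assoc nat_pow_Suc2 nat_pow_closed)
      have "c \<otimes> y \<otimes> x [^] m = y \<otimes> (c \<otimes> x [^] m)" using x y Suc.prems(2)
        by (simp add: m_lcomm m_comm m_assoc)
      then show "c \<otimes> y \<otimes> x [^] m \<in> I" using Suc.prems(3) y I_l_closed by simp
    qed
    have "c \<otimes> (x \<oplus> y) [^] Suc k = (c \<otimes> x) \<otimes> (x \<oplus> y) [^] k \<oplus> (c \<otimes> y) \<otimes> (x \<oplus> y) [^] k"
      using x y Suc.prems(2)
      by (simp add: nat_pow_Suc2 m_assoc m_lcomm m_comm r_distr l_distr)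
    then show ?thesis using h1 h2 by simp
  qed
qed

lemma (in cring) rad_ideal:
  assumes I: "ideal I R"
  shows "ideal (rad R I) R"
proof -
  interpret ideal I R by fact
  have sub: "subgroup (rad R I) (add_monoid R)"
  proof (rule add.subgroupI)
    show "rad R I \<subseteq> carrier R" by (auto simp: rad_def)
    have "\<zero> \<in> rad R I" unfolding rad_def by (auto intro!: exI[of _ 1])
    then show "rad R I \<noteq> {}" by blast
  next
    fix a assume "a \<in> rad R I"
    then obtain n :: nat where a: "a \<in> carrier R" "a [^] n \<in> I" by (auto simp: rad_def)
    have "(\<ominus> a) [^] n = (\<ominus> \<one>) [^] n \<otimes> a [^] n"
      using a by (simp add: nat_pow_distrib[symmetric] l_minus)
    then have "(\<ominus> a) [^] n \<in> I" using a I_l_closed by simp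
    then show "\<ominus> a \<in> rad R I" using a
      by (auto simp: rad_def)
  next
    fix a b assume "a \<in> rad R I" "b \<in> rad R I"
    then obtain m n :: nat where a: "a \<in> carrier R" "a [^] m \<in> I" and b: "b \<in> carrier R" "b [^] n \<in> I"
      by (auto simp: rad_def)
    have "\<one> \<otimes> (a \<oplus> b) [^] (m + n) \<in> I"
      by (rule rad_sum_aux[OF I a(1) b(1), of "m+n" m n]) (use a b in auto)
    then show "a \<oplus> b \<in> rad R I" using a b by (auto simp: rad_def)
  qed
  show ?thesis
  proof (rule idealI[OF ring_axioms sub])
    fix a x assume "a \<in> rad R I" "x \<in> carrier R"
    then obtain n :: nat where a: "a \<in> carrier R" "a [^] n \<in> I" and x: "x \<in> carrier R"
      by (auto simp: rad_def)
    have "(x \<otimes> a) [^] n = x [^] n \<otimes> a [^] n" using a x by (simp add: nat_pow_distrib)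
    then have "(x \<otimes> a) [^] n \<in> I" using a x I_l_closed by simp
    then show "x \<otimes> a \<in> rad R I" using a x unfolding rad_def by blast
    then show "a \<otimes> x \<in> rad R I" using a x by (simp add: m_comm)
  qed
qed

theorem proposition2p16:
  fixes R (structure) and \<delta> \<gamma> :: "'a set \<Rightarrow> 'a set" and I :: "'a set"
  assumes "cring R" and "\<one>\<^bsub>R\<^esub> \<noteq> \<zero>\<^bsub>R\<^esub>"
    and "expansion R \<delta>" and "expansion R \<gamma>"
    and "ideal I R" and "I \<noteq> carrier R"
  shows "(n_ideal R (\<delta> I) \<longrightarrow> delta_n_ideal R \<delta> I)
    \<and> (delta_n_ideal R (rad R) I \<longrightarrow> n_ideal R (rad R I))
    \<and> ((\<forall>J. ideal J R \<longrightarrow> \<delta> J \<subseteq> \<gamma> J) \<and> delta_n_ideal R \<delta> I \<longrightarrow> delta_n_ideal R \<gamma> I)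
    \<and> (delta_n_ideal R \<delta> (\<gamma> I) \<longrightarrow> delta_n_ideal R (\<delta> \<circ> \<gamma>) I)"
proof (intro conjI impI)
  interpret cring R by fact
  have Ig: "I \<subseteq> \<gamma> I" using assms(4,5) by (auto simp: expansion_def)
  have Id: "I \<subseteq> \<delta> I" using assms(3,5) by (auto simp: expansion_def)
  show "delta_n_ideal R \<delta> I" if "n_ideal R (\<delta> I)"
    using that assms(5,6) Id unfolding n_ideal_def delta_n_ideal_def by blast
  show "delta_n_ideal R \<gamma> I" if "(\<forall>J. ideal J R \<longrightarrow> \<delta> J \<subseteq> \<gamma> J) \<and> delta_n_ideal R \<delta> I"
    using that assms(5,6) unfolding delta_n_ideal_def by blast
  show "delta_n_ideal R (\<delta> \<circ> \<gamma>) I" if "delta_n_ideal R \<delta> (\<gamma> I)"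
    using that assms(5,6) Ig unfolding delta_n_ideal_def by auto
  show "n_ideal R (rad R I)" if H: "delta_n_ideal R (rad R) I"
    unfolding n_ideal_def
  proof (intro conjI ballI impI)
    interpret ideal I R by fact
    show "ideal (rad R I) R" by (rule rad_ideal[OF assms(5)])
    show "rad R I \<noteq> carrier R"
    proof
      assume "rad R I = carrier R"
      then have "\<one> \<in> rad R I" by simp
      then have "\<one> \<in> I" unfolding rad_def by auto
      then show False using assms(6) one_imp_carrier by simp
    qed
    fix a b assume a: "a \<in> carrier R" and b: "b \<in> carrier R"
      and ab: "a \<otimes> b \<in> rad R I \<and> a \<notin> nilrad R"
    then obtain n :: nat where n: "a [^] n \<otimes> b [^] n \<in> I"
      by (auto simp: rad_def nat_pow_distrib)
    have "a [^] n \<notin> nilrad R"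
    proof
      assume "a [^] n \<in> nilrad R"
      then obtain k :: nat where "(a [^] n) [^] k = \<zero>" by (auto simp: nilrad_def)
      then have "a [^] (n * k) = \<zero>" using a by (simp add: nat_pow_pow)
      then show False using ab a by (auto simp: nilrad_def)
    qed
    then have "b [^] n \<in> rad R I" using H n a b unfolding delta_n_ideal_def by auto
    then obtain k :: nat where "(b [^] n) [^] k \<in> I" by (auto simp: rad_def)
    then show "b \<in> rad R I" using b by (auto simp: rad_def nat_pow_pow)
  qed
qed

end
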